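(* Let $U$ be a finite set of black vertices of $\frac1n\Lambda$, let $\bar U=U\cup\{u-\frac1ne_i+\frac1ne_j:u\in U,\ 1\le i,j\le D\}$ and $\partial U=\bar U\setminus U$. Let $q,q_+,q_-:\bar U\to(0,\infty)$ satisfy, for all $u\in U$, $\mathcal C_n(q)(u)=1$, $\mathcal C_n(q_+)(u)>1$ and $\mathcal C_n(q_-)(u)<1$, where $$\mathcal C_n(q)(u)=q(u)\sum_{i=1}^D\Big(\sum_{j=1}^Dq\big(u-\tfrac1ne_i+\tfrac1ne_j\big)\Big)^{-1}.$$ Then $\min_{\bar U}q/q_-=\min_{\partial U}q/q_-$ and $\max_{\bar U}q/q_+=\max_{\partial U}q/q_+$.
   Context: $\Lambda$ is a bipartite lattice in $\mathbb R^d$: vectors $e_1,\dots,e_D$ spanning $\mathbb R^d$ with $\sum e_i=0$ and $e_i\in v_0+\mathbb Z^d$; white vertices $\mathbb Z^d$, black vertices $\mathbb Z^d+v_0$, each white vertex $w$ joined to $w+e_1,\dots,w+e_D$ (so each black vertex $u$ is joined to $u-e_1,\dots,u-e_D$). *)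

theory Defs
  imports "HOL-Analysis.Analysis"
begin

definition int_lattice :: "(real^'d) set" where
  "int_lattice = {z. \<forall>k. z $ k \<in> \<int>}"

definition bipartite_lattice :: "nat \<Rightarrow> (nat \<Rightarrow> real^'d) \<Rightarrow> real^'d \<Rightarrow> bool" where
  "bipartite_lattice D e v0 \<longleftrightarrow>
     span (e ` {1..D}) = UNIV \<and> (\<Sum>i=1..D. e i) = 0 \<and>
     (\<forall>i\<in>{1..D}. e i - v0 \<in> int_lattice)"

definition black_vertices :: "nat \<Rightarrow> real^'d \<Rightarrow> (real^'d) set" where
  "black_vertices n v0 = {(1 / real n) *\<^sub>R (z + v0) | z. z \<in> int_lattice}"

definition closure_U :: "nat \<Rightarrow> nat \<Rightarrow> (nat \<Rightarrow> real^'d) \<Rightarrow> (real^'d) set \<Rightarrow> (real^'d) set" where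
  "closure_U D n e U = U \<union> {u - (1 / real n) *\<^sub>R e i + (1 / real n) *\<^sub>R e j | u i j.
       u \<in> U \<and> i \<in> {1..D} \<and> j \<in> {1..D}}"

definition boundary_U :: "nat \<Rightarrow> nat \<Rightarrow> (nat \<Rightarrow> real^'d) \<Rightarrow> (real^'d) set \<Rightarrow> (real^'d) set" where
  "boundary_U D n e U = closure_U D n e U - U"

definition Cn :: "nat \<Rightarrow> nat \<Rightarrow> (nat \<Rightarrow> real^'d) \<Rightarrow> (real^'d \<Rightarrow> real) \<Rightarrow> real^'d \<Rightarrow> real" where
  "Cn D n e q u = q u * (\<Sum>i=1..D. inverse (\<Sum>j=1..D.
       q (u - (1 / real n) *\<^sub>R e i + (1 / real n) *\<^sub>R e j)))"

end

theory Submission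
  imports Defs
begin

lemma nb_in_closure:
  "u \<in> U \<Longrightarrow> i \<in> {1..D} \<Longrightarrow> j \<in> {1..D} \<Longrightarrow>
   u - (1 / real n) *\<^sub>R e i + (1 / real n) *\<^sub>R e j \<in> closure_U D n e U"
  unfolding closure_U_def by blast

lemma finite_closure: "finite U \<Longrightarrow> finite (closure_U D n e U)"
proof -
  assume f: "finite U"
  have "{u - (1 / real n) *\<^sub>R e i + (1 / real n) *\<^sub>R e j | u i j.
       u \<in> U \<and> i \<in> {1..D} \<and> j \<in> {1..D}} \<subseteq>
    (\<lambda>(u,i,j). u - (1 / real n) *\<^sub>R e i + (1 / real n) *\<^sub>R e j) ` (U \<times> {1..D} \<times> {1..D})"
  proof
    fix x assume "x \<in> {u - (1 / real n) *\<^sub>R e i + (1 / real n) *\<^sub>R e j | u i j.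
       u \<in> U \<and> i \<in> {1..D} \<and> j \<in> {1..D}}"
    then obtain u i j where "x = u - (1 / real n) *\<^sub>R e i + (1 / real n) *\<^sub>R e j"
      "u \<in> U" "i \<in> {1..D}" "j \<in> {1..D}" by blast
    then show "x \<in> (\<lambda>(u,i,j). u - (1 / real n) *\<^sub>R e i + (1 / real n) *\<^sub>R e j) ` (U \<times> {1..D} \<times> {1..D})"
      by (intro rev_image_eqI[of "(u,i,j)"]) auto
  qed
  moreover have "finite ((\<lambda>(u,i,j). u - (1 / real n) *\<^sub>R e i + (1 / real n) *\<^sub>R e j) ` (U \<times> {1..D} \<times> {1..D}))"
    using f by simp
  ultimately show ?thesis using f unfolding closure_U_def by (meson finite_Un finite_subset)
qed

lemma cmp:
  fixes f g :: "real^'d \<Rightarrow> real"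
  assumes u: "u \<in> U" and c: "c > 0"
    and pos: "\<forall>v\<in>closure_U D n e U. f v > 0 \<and> g v > 0"
    and ge: "\<forall>v\<in>closure_U D n e U. c * f v \<le> g v"
    and eq: "g u = c * f u"
  shows "Cn D n e g u \<le> Cn D n e f u"
proof -
  let ?w = "\<lambda>i j. u - (1 / real n) *\<^sub>R e i + (1 / real n) *\<^sub>R e j"
  have inner: "inverse (\<Sum>j=1..D. g (?w i j)) \<le> inverse c * inverse (\<Sum>j=1..D. f (?w i j))"
    if i: "i \<in> {1..D}" for i
  proof -
    have fpos: "(\<Sum>j=1..D. f (?w i j)) > 0"
      apply (rule sum_pos) using i pos nb_in_closure[OF u i] by auto
    have "c * (\<Sum>j=1..D. f (?w i j)) \<le> (\<Sum>j=1..D. g (?w i j))"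
      unfolding sum_distrib_left
      apply (rule sum_mono) using ge nb_in_closure[OF u i] by auto
    moreover have "c * (\<Sum>j=1..D. f (?w i j)) > 0" using c fpos by simp
    ultimately have "inverse (\<Sum>j=1..D. g (?w i j)) \<le> inverse (c * (\<Sum>j=1..D. f (?w i j)))"
      by (rule le_imp_inverse_le)
    then show ?thesis by (simp add: mult.commute)
  qed
  have s: "(\<Sum>i=1..D. inverse (\<Sum>j=1..D. g (?w i j))) \<le> inverse c * (\<Sum>i=1..D. inverse (\<Sum>j=1..D. f (?w i j)))"
    unfolding sum_distrib_left by (rule sum_mono) (use inner in auto)
  have "u \<in> closure_U D n e U" using u unfolding closure_U_def by blast
  then have gu: "g u \<ge> 0" using pos by force
  have "Cn D n e g u \<le> g u * (inverse c * (\<Sum>i=1..D. inverse (\<Sum>j=1..D. f (?w i j))))"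
    unfolding Cn_def by (rule mult_left_mono[OF s gu])
  also have "\<dots> = Cn D n e f u" unfolding Cn_def eq using c by simp
  finally show ?thesis .
qed

theorem mainTheorem17:
  fixes D n :: nat and e :: "nat \<Rightarrow> real^'d" and v0 :: "real^'d"
    and U :: "(real^'d) set" and q qp qm :: "real^'d \<Rightarrow> real"
  assumes "bipartite_lattice D e v0"
    and "n \<ge> 1"
    and "finite U" and "U \<subseteq> black_vertices n v0"
    and "\<forall>x\<in>closure_U D n e U. q x > 0 \<and> qp x > 0 \<and> qm x > 0"
    and "\<forall>u\<in>U. Cn D n e q u = 1 \<and> Cn D n e qp u > 1 \<and> Cn D n e qm u < 1"
  shows "Min ((\<lambda>x. q x / qm x) ` closure_U D n e U) = Min ((\<lambda>x. q x / qm x) ` boundary_U D n e U)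
     \<and> Max ((\<lambda>x. q x / qp x) ` closure_U D n e U) = Max ((\<lambda>x. q x / qp x) ` boundary_U D n e U)"
proof (cases "U = {}")
  case True
  then show ?thesis unfolding boundary_U_def closure_U_def by simp
next
  case False
  let ?C = "closure_U D n e U"
  let ?B = "boundary_U D n e U"
  have fin: "finite ?C" using finite_closure assms(3) by blast
  have UC: "U \<subseteq> ?C" unfolding closure_U_def by blast
  have ne: "?C \<noteq> {}" using False UC by blast
  have BC: "?B \<subseteq> ?C" unfolding boundary_U_def by blast
  have pos: "\<forall>x\<in>?C. q x > 0 \<and> qp x > 0 \<and> qm x > 0" using assms(5) .
  have p1: "Min ((\<lambda>x. q x / qm x) ` ?C) = Min ((\<lambda>x. q x / qm x) ` ?B)"
  proof -
    let ?r = "\<lambda>x. q x / qm x"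
    let ?m = "Min (?r ` ?C)"
    have "?m \<in> ?r ` ?C" by (rule Min_in) (use fin ne in auto)
    then obtain x where x: "x \<in> ?C" "?r x = ?m" by force
    have xU: "x \<notin> U"
    proof
      assume xu: "x \<in> U"
      have "?r x > 0" using x(1) pos by simp
      then have mpos: "?m > 0" using x(2) by linarith
      have ge: "\<forall>v\<in>?C. ?m * qm v \<le> q v"
      proof
        fix v assume v: "v \<in> ?C"
        have "?m \<le> ?r v" using fin v by auto
        then show "?m * qm v \<le> q v" using pos v by (simp add: le_divide_eq)
      qed
      have qmx: "qm x > 0" using x(1) pos by simp
      have "q x / qm x = ?m" using x(2) .
      then have eq: "q x = ?m * qm x" using qmx by (simp add: divide_eq_eq)
      have "Cn D n e q x \<le> Cn D n e qm x"
        by (rule cmp[OF xu mpos _ ge eq]) (use pos in auto)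
      moreover have "Cn D n e q x = 1" "Cn D n e qm x < 1" "Cn D n e qp x > 1"
        using assms(6) xu by blast+
      ultimately show False by linarith
    qed
    have xB: "x \<in> ?B" using x xU unfolding boundary_U_def by blast
    have finB: "finite (?r ` ?B)" using fin BC finite_subset by blast
    have "?r x \<in> ?r ` ?B" using xB by (rule imageI)
    then have "Min (?r ` ?B) \<le> ?r x" using finB by (rule Min_le[rotated])
    then have "Min (?r ` ?B) \<le> ?m" using x(2) by linarith
    moreover have "?m \<le> Min (?r ` ?B)"
      by (rule Min_antimono) (use xB BC fin in auto)
    ultimately show ?thesis by linarith
  qed
  have p2: "Max ((\<lambda>x. q x / qp x) ` ?C) = Max ((\<lambda>x. q x / qp x) ` ?B)"
  proof -
    let ?r = "\<lambda>x. q x / qp x"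
    let ?m = "Max (?r ` ?C)"
    have "?m \<in> ?r ` ?C" by (rule Max_in) (use fin ne in auto)
    then obtain x where x: "x \<in> ?C" "?r x = ?m" by force
    have xU: "x \<notin> U"
    proof
      assume xu: "x \<in> U"
      have "?r x > 0" using x(1) pos by simp
      then have mpos: "?m > 0" using x(2) by linarith
      have ipos: "inverse ?m > 0" using mpos by simp
      have ge: "\<forall>v\<in>?C. inverse ?m * q v \<le> qp v"
      proof
        fix v assume v: "v \<in> ?C"
        have "?r v \<le> ?m" using fin v by auto
        then have "q v \<le> ?m * qp v" using pos v by (simp add: divide_le_eq mult.commute)
        then show "inverse ?m * q v \<le> qp v" using mpos
          by (simp add: field_simps)
      qed
      have qpx: "qp x > 0" using x(1) pos by simp
      have "q x / qp x = ?m" using x(2) .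
      then have "q x = ?m * qp x" using qpx by (simp add: divide_eq_eq)
      then have eq: "qp x = inverse ?m * q x" using mpos by simp
      have "Cn D n e qp x \<le> Cn D n e q x"
        by (rule cmp[OF xu ipos _ ge eq]) (use pos in auto)
      moreover have "Cn D n e q x = 1" "Cn D n e qm x < 1" "Cn D n e qp x > 1"
        using assms(6) xu by blast+
      ultimately show False by linarith
    qed
    have xB: "x \<in> ?B" using x xU unfolding boundary_U_def by blast
    have finB: "finite (?r ` ?B)" using fin BC finite_subset by blast
    have "?r x \<in> ?r ` ?B" using xB by (rule imageI)
    then have "?r x \<le> Max (?r ` ?B)" using finB by (rule Max_ge[rotated])
    then have "?m \<le> Max (?r ` ?B)" using x(2) by linarith
    moreover have "Max (?r ` ?B) \<le> ?m"
      by (rule Max_mono) (use xB BC fin in auto)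
    ultimately show ?thesis by linarith
  qed
  show ?thesis using p1 p2 by blast
qed

end
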